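(* Let $\rho$ be a critical radius function on $\mathbb{R}^n$ and $p(\cdot),q(\cdot)\in\mathcal{P}^{\log}(\mathbb{R}^n)$ with $q(\cdot)\le p(\cdot)$. If $w\in A^\rho_{q(\cdot),\infty}$, then $w\in A^\rho_{p(\cdot),\infty}$.
   Context: A critical radius function is $\rho:\mathbb{R}^n\to(0,\infty)$ with constants $c_\rho,N_\rho\ge1$ such that $c_\rho^{-1}\rho(x)\big(1+\frac{|x-y|}{\rho(x)}\big)^{-N_\rho}\le\rho(y)\le c_\rho\rho(x)\big(1+\frac{|x-y|}{\rho(x)}\big)^{N_\rho/(N_\rho+1)}$ for all $x,y$. $\mathcal{P}(\mathbb{R}^n)$ is the set of measurable $p(\cdot):\mathbb{R}^n\to[1,\infty]$, $p^\pm$ ess sup/inf, $p'(\cdot)$ the pointwise conjugate exponent, $\|\cdot\|_{p(\cdot)}$ the Luxemburg norm $\inf\{\lambda>0:\int(|f|/\lambda)^{p(x)}dx\le1\}$. $p\in\mathcal{P}^{\log}(\mathbb{R}^n)$ means $p^+<\infty$ and there are $C,p_\infty$ with $|p(x)-p(y)|\le-C/\log|x-y|$ for $|x-y|<1/2$ and $|p(x)-p_\infty|\le C/\log(e+|x|)$. A weight is a locally integrable $w$ with $0<w<\infty$ a.e.; $w\in A^\rho_{p(\cdot),\infty}$ if there are $\theta>0,C>0$ with $\|w\chi_B\|_\infty\|w^{-1}\chi_B\|_{p'(\cdot)}\le C\|\chi_B\|_{p'(\cdot)}(1+\frac r{\rho(x)})^\theta$ for all balls $B=B(x,r)$. *)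

theory Defs
  imports "HOL-Analysis.Analysis" "HOL-Probability.Essential_Supremum"
begin

definition critical_radius :: "('a::euclidean_space \<Rightarrow> real) \<Rightarrow> bool" where
  "critical_radius \<rho> \<longleftrightarrow> (\<forall>x. \<rho> x > 0) \<and>
     (\<exists>c N. c \<ge> 1 \<and> N \<ge> 1 \<and> (\<forall>x y.
        (1/c) * \<rho> x * (1 + dist x y / \<rho> x) powr (- N) \<le> \<rho> y \<and>
        \<rho> y \<le> c * \<rho> x * (1 + dist x y / \<rho> x) powr (N / (N + 1))))"

definition var_exp :: "('a::euclidean_space \<Rightarrow> ereal) \<Rightarrow> bool" where
  "var_exp p \<longleftrightarrow> p \<in> borel_measurable lebesgue \<and> (\<forall>x. 1 \<le> p x)"

definition exp_sup :: "('a::euclidean_space \<Rightarrow> ereal) \<Rightarrow> ereal" where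
  "exp_sup p = esssup lebesgue p"

definition conj_exp :: "('a \<Rightarrow> ereal) \<Rightarrow> 'a \<Rightarrow> ereal" where
  "conj_exp p x = (if p x = 1 then \<infinity> else if p x = \<infinity> then 1 else p x / (p x - 1))"

definition log_holder :: "('a::euclidean_space \<Rightarrow> ereal) \<Rightarrow> bool" where
  "log_holder p \<longleftrightarrow> var_exp p \<and> exp_sup p < \<infinity> \<and>
     (\<exists>C pinf :: real.
        (\<forall>x y. dist x y < 1/2 \<longrightarrow> \<bar>p x - p y\<bar> \<le> ereal (- C / ln (dist x y))) \<and>
        (\<forall>x. \<bar>p x - ereal pinf\<bar> \<le> ereal (C / ln (exp 1 + norm x))))"

definition exp_pow :: "ereal \<Rightarrow> real \<Rightarrow> ennreal" where
  "exp_pow p t = (if p = \<infinity> then (if t \<le> 1 then 0 else \<infinity>)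
                  else ennreal (t powr real_of_ereal p))"

text \<open>Luxemburg norm of the variable Lebesgue space (value \<infinity> if no \<lambda> works).\<close>
definition lux_norm :: "('a::euclidean_space \<Rightarrow> ereal) \<Rightarrow> ('a \<Rightarrow> real) \<Rightarrow> ereal" where
  "lux_norm p f = Inf {ereal l | l. l > 0 \<and>
      (\<integral>\<^sup>+ x. exp_pow (p x) (\<bar>f x\<bar> / l) \<partial>lebesgue) \<le> 1}"

definition Linf_norm :: "('a::euclidean_space \<Rightarrow> real) \<Rightarrow> ereal" where
  "Linf_norm f = esssup lebesgue (\<lambda>x. ereal \<bar>f x\<bar>)"

definition weight :: "('a::euclidean_space \<Rightarrow> real) \<Rightarrow> bool" where
  "weight w \<longleftrightarrow> (\<forall>K. compact K \<longrightarrow> set_integrable lebesgue K w) \<and>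
                 (AE x in lebesgue. 0 < w x)"

definition A_rho_infty :: "('a::euclidean_space \<Rightarrow> real) \<Rightarrow> ('a \<Rightarrow> ereal) \<Rightarrow> ('a \<Rightarrow> real) set" where
  "A_rho_infty \<rho> p = {w. weight w \<and> (\<exists>\<theta>>0. \<exists>C>0. \<forall>x r. r > 0 \<longrightarrow>
      Linf_norm (\<lambda>y. w y * indicator (ball x r) y)
        * lux_norm (conj_exp p) (\<lambda>y. indicator (ball x r) y / w y)
      \<le> ereal C * lux_norm (conj_exp p) (indicator (ball x r))
          * ereal ((1 + r / \<rho> x) powr \<theta>))}"

end

theory Submission
  imports Defs
begin
definition ep :: "real \<Rightarrow> real \<Rightarrow> ennreal" where
  "ep g t = (if g = 0 then (if t \<le> 1 then 0 else \<infinity>) else ennreal (t powr (1/g)))"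

lemma ep_zero[simp]: "ep g 0 = 0"
  by (simp add: ep_def)

lemma exp_pow_conj:
  assumes "p x = ereal P" "P \<ge> 1"
  shows "exp_pow (conj_exp p x) t = ep (1 - 1/P) t"
proof (cases "P = 1")
  case True then show ?thesis using assms by (simp add: conj_exp_def exp_pow_def ep_def)
next
  case False
  then have P1: "P > 1" using assms by simp
  have e: "ereal P - 1 = ereal (P - 1)" by (simp add: one_ereal_def)
  have "conj_exp p x = ereal (P/(P-1))" using assms P1 by (simp add: conj_exp_def e)
  moreover have "1 - 1/P \<noteq> 0" using P1 by (simp add: field_simps)
  moreover have "1/(1-1/P) = P/(P-1)" using P1 by (simp add: field_simps)
  ultimately show ?thesis by (simp add: exp_pow_def ep_def)
qed

lemma ep_mono: assumes "0 \<le> s" "s \<le> t" "0 \<le> g" shows "ep g s \<le> ep g t"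
  using assms by (auto simp: ep_def intro!: ennreal_leI powr_mono2)

lemma ep_upper:
  assumes "V > 0" "L > 0" "L \<ge> V powr a" "0 \<le> a" "a \<le> 1"
  shows "ep a (1/L) \<le> ennreal (1/V)"
proof (cases "a = 0")
  case True then show ?thesis using assms by (simp add: ep_def)
next
  case False
  then have a: "a > 0" using assms by simp
  have "(1/L) powr (1/a) \<le> (1/ V powr a) powr (1/a)"
    using assms a by (intro powr_mono2) (auto simp: field_simps)
  also have "\<dots> = 1/V" using assms a by (simp add: powr_divide powr_powr)
  finally show ?thesis using False by (simp add: ep_def ennreal_leI)
qed

lemma self_le_powr: fixes k e :: real assumes "1 \<le> k" "1 \<le> e" shows "k \<le> k powr e"
proof -
  have "k powr 1 \<le> k powr e" using assms by (intro Transcendental.powr_mono) auto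
  then show ?thesis using assms by simp
qed

lemma ep_lower:
  assumes "V > 0" "L > 0" "k > 1" "L * k \<le> V powr g" "0 \<le> g" "g \<le> 1"
  shows "ennreal (k/V) \<le> ep g (1/L)"
proof (cases "g = 0")
  case True
  then have "L * k \<le> 1" using assms by simp
  moreover have "L * 1 < L * k" using assms by (intro mult_strict_left_mono) auto
  ultimately have "L < 1" by simp
  then have "1 < 1/L" using assms by simp
  then show ?thesis using True by (simp add: ep_def)
next
  case False
  then have g: "g > 0" using assms by simp
  have ig: "1 \<le> 1/g" using g assms by simp
  have "k \<le> k powr (1/g)" using assms ig by (intro self_le_powr) auto
  then have "k / V \<le> k powr (1/g) / V" using assms by (intro divide_right_mono) auto
  also have "\<dots> = (k / V powr g) powr (1/g)" using assms g
    by (simp add: powr_divide powr_powr)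
  also have "\<dots> \<le> (1/L) powr (1/g)"
  proof (intro powr_mono2)
    show "0 \<le> 1/g" using g by simp
    show "0 \<le> k / V powr g" using assms by simp
    show "k / V powr g \<le> 1/L" using assms by (simp add: divide_simps mult.commute)
  qed
  finally show ?thesis using False by (simp add: ep_def ennreal_leI)
qed

lemma ep_half: assumes "t \<ge> 0" "0 \<le> g" "g \<le> 1" shows "ep g (t/2) \<le> ep g t / 2"
proof (cases "g = 0")
  case True
  show ?thesis
  proof (cases "t \<le> 2")
    case True then show ?thesis using \<open>g = 0\<close> by (simp add: ep_def)
  next
    case False then show ?thesis using \<open>g = 0\<close> by (simp add: ep_def ennreal_top_divide)
  qed
next
  case False
  then have g: "g > 0" using assms by simp
  have ig: "1 \<le> 1/g" using g assms by simp
  have "(t/2) powr (1/g) = t powr (1/g) / 2 powr (1/g)" using assms by (simp add: powr_divide)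
  also have "\<dots> \<le> t powr (1/g) / 2" 
    using self_le_powr[of 2 "1/g"] ig by (intro divide_left_mono) auto
  finally have "(t/2) powr (1/g) \<le> t powr (1/g) / 2" .
  then have "ennreal ((t/2) powr (1/g)) \<le> ennreal (t powr (1/g) / 2)" by (rule ennreal_leI)
  also have "\<dots> = ennreal (t powr (1/g)) / 2" by (simp add: divide_ennreal[symmetric])
  finally show ?thesis using False by (simp add: ep_def)
qed

lemma ep_young:
  assumes "0 \<le> a" "0 \<le> b" "a + b \<le> 1" "u \<ge> 0" "v \<ge> 0"
  shows "ep (a + b) (u * v) \<le> ep a u + ep b v"
proof -
  consider "u > 1 \<and> a = 0" | "v > 1 \<and> b = 0" | "(u \<le> 1 \<or> a > 0) \<and> (v \<le> 1 \<or> b > 0)"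
    using assms by linarith
  then show ?thesis
  proof cases
    case 1 then show ?thesis by (simp add: ep_def)
  next
    case 2 then show ?thesis by (simp add: ep_def)
  next
    case 3
    show ?thesis
    proof (cases "a = 0")
      case a0: True
      then have u1: "u \<le> 1" using 3 by simp
      show ?thesis
      proof (cases "b = 0")
        case True
        then have "v \<le> 1" using 3 by simp
        then have "u * v \<le> 1" using u1 assms by (simp add: mult_le_one)
        then show ?thesis using True a0 by (simp add: ep_def)
      next
        case False
        have "u * v \<le> v" using u1 assms by (simp add: mult_left_le_one_le)
        then have "ep b (u * v) \<le> ep b v" using assms by (intro ep_mono) auto
        then show ?thesis using a0 by (simp add: add_increasing)
      qed
    next
      case aF: False
      show ?thesis
      proof (cases "b = 0")
        case True
        have "u * v \<le> u" using 3 True assms by (simp add: mult_right_le_one_le)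
        then have "ep a (u * v) \<le> ep a u" using assms by (intro ep_mono) auto
        then show ?thesis using True by (simp add: add_increasing2)
      next
        case bF: False
        have a: "a > 0" and b: "b > 0" using aF bF assms by auto
        define g where "g = a + b"
        have g: "g > 0" "g \<le> 1" using a b assms by (auto simp: g_def)
        have main: "(u * v) powr (1/g) \<le> u powr (1/a) + v powr (1/b)"
        proof (cases "u = 0 \<or> v = 0")
          case True then show ?thesis by auto
        next
          case False
          then have up: "u > 0" and vp: "v > 0" using assms by auto
          have "(u * v) powr (1/g) = (u powr (1/a)) powr (a/g) * (v powr (1/b)) powr (b/g)"
            using up vp a b g by (simp add: powr_mult powr_powr)
          also have "\<dots> \<le> (a/g) * u powr (1/a) + (b/g) * v powr (1/b)"
            using up vp a b g by (intro Youngs_inequality_0) (auto simp: g_def add_divide_distrib[symmetric])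
          also have "\<dots> \<le> u powr (1/a) + v powr (1/b)"
            using a b g by (intro add_mono mult_left_le_one_le) (auto simp: g_def field_simps)
          finally show ?thesis .
        qed
        have "ep (a+b) (u * v) = ennreal ((u * v) powr (1/g))" using g by (simp add: ep_def g_def)
        also have "\<dots> \<le> ennreal (u powr (1/a) + v powr (1/b))" using main by (rule ennreal_leI)
        also have "\<dots> = ep a u + ep b v" using a b by (simp add: ep_def ennreal_plus)
        finally show ?thesis .
      qed
    qed
  qed
qed

lemma measurable_ep[measurable]:
  assumes [measurable]: "g \<in> borel_measurable M" "t \<in> borel_measurable M"
  shows "(\<lambda>x. ep (g x) (t x)) \<in> borel_measurable M"
proof -
  have s1: "{x \<in> space M. g x = 0} \<in> sets M" by measurable
  have s2: "{x \<in> space M. t x \<le> 1} \<in> sets M" by measurable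
  have m3: "(\<lambda>x. t x powr (1 / g x)) \<in> borel_measurable M" by measurable
  have m4: "(\<lambda>x. ennreal (t x powr (1 / g x))) \<in> borel_measurable M"
    using m3 by (rule measurable_compose) simp
  show ?thesis unfolding ep_def
    by (intro measurable_If s1 s2 m4 measurable_const) auto
qed

definition LN :: "('a::euclidean_space \<Rightarrow> real) \<Rightarrow> ('a \<Rightarrow> real) \<Rightarrow> ereal" where
  "LN G f = Inf {ereal l | l. l > 0 \<and> (\<integral>\<^sup>+ x. ep (G x) (\<bar>f x\<bar> / l) \<partial>lebesgue) \<le> 1}"

lemma lux_LN:
  assumes "\<And>x. p x = ereal (P x)" "\<And>x. P x \<ge> 1"
  shows "lux_norm (conj_exp p) f = LN (\<lambda>x. 1 - 1 / P x) f"
  proof -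
  have "\<And>x t. exp_pow (conj_exp p x) t = ep (1 - 1 / P x) t"
    by (intro exp_pow_conj assms)
  then show ?thesis unfolding lux_norm_def LN_def by simp
qed

lemma LN_le: assumes "l > 0" "(\<integral>\<^sup>+ x. ep (G x) (\<bar>f x\<bar> / l) \<partial>lebesgue) \<le> 1"
  shows "LN G f \<le> ereal l"
  unfolding LN_def using assms by (intro Inf_lower) auto

lemma LN_nonneg: "LN G f \<ge> 0"
  unfolding LN_def by (intro Inf_greatest) auto

lemma LN_less:
  assumes "LN G f < ereal l" "\<And>x. 0 \<le> G x"
  shows "l > 0" "(\<integral>\<^sup>+ x. ep (G x) (\<bar>f x\<bar> / l) \<partial>lebesgue) \<le> 1"
proof -
  obtain y where y: "y \<in> {ereal l | l. l > 0 \<and> (\<integral>\<^sup>+ x. ep (G x) (\<bar>f x\<bar> / l) \<partial>lebesgue) \<le> 1}" "y < ereal l"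
    using assms(1) unfolding LN_def by (auto simp: Inf_less_iff)
  then obtain l' where l': "y = ereal l'" "l' > 0" "(\<integral>\<^sup>+ x. ep (G x) (\<bar>f x\<bar> / l') \<partial>lebesgue) \<le> 1"
    by auto
  have ll: "l' < l" using y l' by simp
  then show "l > 0" using l' by simp
  have "(\<integral>\<^sup>+ x. ep (G x) (\<bar>f x\<bar> / l) \<partial>lebesgue) \<le> (\<integral>\<^sup>+ x. ep (G x) (\<bar>f x\<bar> / l') \<partial>lebesgue)"
    using ll l' assms(2) by (intro nn_integral_mono ep_mono) (auto intro: divide_left_mono)
  then show "(\<integral>\<^sup>+ x. ep (G x) (\<bar>f x\<bar> / l) \<partial>lebesgue) \<le> 1" using l' by simp
qed

lemma LN_ge:
  assumes "\<And>l. 0 < l \<Longrightarrow> l < L \<Longrightarrow> (\<integral>\<^sup>+ x. ep (G x) (\<bar>f x\<bar> / l) \<partial>lebesgue) > 1"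
  shows "ereal L \<le> LN G f"
  unfolding LN_def
proof (intro Inf_greatest)
  fix y assume "y \<in> {ereal l | l. l > 0 \<and> (\<integral>\<^sup>+ x. ep (G x) (\<bar>f x\<bar> / l) \<partial>lebesgue) \<le> 1}"
  then obtain l where "y = ereal l" "l > 0" "(\<integral>\<^sup>+ x. ep (G x) (\<bar>f x\<bar> / l) \<partial>lebesgue) \<le> 1" by auto
  then show "ereal L \<le> y" using assms[of l] by (cases "l < L") auto
qed

lemma powr_dev:
  fixes V M :: real
  assumes "M \<ge> 1" "\<And>e. V powr e \<le> M powr \<bar>e\<bar>" "\<bar>e\<bar> \<le> d"
  shows "V powr e \<le> M powr d"
proof -
  have "M powr \<bar>e\<bar> \<le> M powr d" by (rule Transcendental.powr_mono[OF assms(3) assms(1)])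
  then show ?thesis using assms(2)[of e] by linarith
qed

lemma powr_dev_low:
  fixes V M :: real
  assumes "V > 0" "M \<ge> 1" "\<And>e. V powr e \<le> M powr \<bar>e\<bar>" "\<bar>e\<bar> \<le> d"
  shows "M powr (-d) \<le> V powr e"
proof -
  have "\<bar>-e\<bar> \<le> d" using assms(4) by simp
  then have "V powr (-e) \<le> M powr d" by (rule powr_dev[OF assms(2) assms(3)])
  moreover have "V powr (-e) > 0" using assms(1) by simp
  moreover have "M powr d > 0" using assms(2) by simp
  ultimately have "1 / M powr d \<le> 1 / V powr (-e)" by (intro divide_left_mono) (auto intro: mult_pos_pos)
  moreover have "1 / M powr d = M powr (-d)" using assms(2) by (simp add: powr_minus_divide)
  moreover have "1 / V powr (-e) = V powr e" using assms(1) by (simp add: powr_minus_divide)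
  ultimately show ?thesis by simp
qed
lemma ball_est1:
  fixes B :: "'a::euclidean_space set" and Ga :: "'a \<Rightarrow> real"
  assumes B: "B \<in> sets lebesgue" "emeasure lebesgue B = ennreal V" "V > 0"
    and M: "M \<ge> 1" "\<And>e. V powr e \<le> M powr \<bar>e\<bar>"
    and G: "\<And>x. 0 \<le> Ga x" "\<And>x. Ga x \<le> 1"
    and osc: "\<And>x. x \<in> B \<Longrightarrow> \<bar>Ga x - a0\<bar> \<le> \<delta>"
  shows "LN Ga (indicator B) \<le> ereal (V powr a0 * M powr \<delta>)"
proof -
  define l where "l = V powr a0 * M powr \<delta>"
  have l: "l > 0" using B M by (simp add: l_def)
  have pt: "ep (Ga x) (\<bar>indicator B x\<bar> / l) \<le> ennreal (1/V) * indicator B x" for x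
  proof (cases "x \<in> B")
    case True
    have "V powr Ga x = V powr a0 * V powr (Ga x - a0)" using B by (simp add: powr_add[symmetric])
    also have "\<dots> \<le> V powr a0 * M powr \<delta>"
      by (rule mult_left_mono[OF powr_dev[OF M(1) M(2) osc[OF True]]]) simp
    finally have "V powr Ga x \<le> l" by (simp add: l_def)
    then have "ep (Ga x) (1 / l) \<le> ennreal (1/V)" using B l G by (intro ep_upper) auto
    then show ?thesis using True by simp
  qed simp
  have "(\<integral>\<^sup>+ x. ep (Ga x) (\<bar>indicator B x\<bar> / l) \<partial>lebesgue) \<le> (\<integral>\<^sup>+ x. ennreal (1/V) * indicator B x \<partial>lebesgue)"
    by (intro nn_integral_mono pt)
  also have "\<dots> = ennreal (1/V) * ennreal V" using B by (simp add: nn_integral_cmult_indicator)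
  also have "\<dots> = ennreal (1/V * V)" using B by (intro ennreal_mult[symmetric]) auto
  also have "\<dots> = 1" using B by simp
  finally show ?thesis unfolding l_def[symmetric] using l by (intro LN_le) auto
qed

lemma ball_est2:
  fixes B :: "'a::euclidean_space set" and Gp :: "'a \<Rightarrow> real"
  assumes B: "B \<in> sets lebesgue" "emeasure lebesgue B = ennreal V" "V > 0"
    and M: "M \<ge> 1" "\<And>e. V powr e \<le> M powr \<bar>e\<bar>"
    and G: "\<And>x. 0 \<le> Gp x" "\<And>x. Gp x \<le> 1"
    and osc: "\<And>x. x \<in> B \<Longrightarrow> \<bar>Gp x - g0\<bar> \<le> \<delta>"
  shows "ereal (V powr g0 * M powr (-\<delta>)) \<le> LN Gp (indicator B)"
proof (rule LN_ge)
  define L where "L = V powr g0 * M powr (-\<delta>)"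
  fix l :: real assume l: "0 < l" "l < V powr g0 * M powr (-\<delta>)"
  define k where "k = L / l"
  have k: "k > 1" using l by (simp add: k_def L_def)
  have lk: "l * k = L" using l by (simp add: k_def)
  have pt: "ennreal (k/V) * indicator B x \<le> ep (Gp x) (\<bar>indicator B x\<bar> / l)" for x
  proof (cases "x \<in> B")
    case True
    have "M powr (-\<delta>) \<le> V powr (Gp x - g0)"
      by (rule powr_dev_low[OF B(3) M(1) M(2) osc[OF True]])
    then have "L \<le> V powr g0 * V powr (Gp x - g0)"
      unfolding L_def by (rule mult_left_mono) simp
    also have "\<dots> = V powr Gp x" using B by (simp add: powr_add[symmetric])
    finally have "ennreal (k/V) \<le> ep (Gp x) (1 / l)" using B l G k lk by (intro ep_lower) auto
    then show ?thesis using True by simp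
  qed simp
  have "ennreal k = ennreal (k/V * V)" using B by simp
  also have "\<dots> = ennreal (k/V) * ennreal V" using B k by (intro ennreal_mult) auto
  also have "\<dots> = (\<integral>\<^sup>+ x. ennreal (k/V) * indicator B x \<partial>lebesgue)"
    using B by (simp add: nn_integral_cmult_indicator)
  also have "\<dots> \<le> (\<integral>\<^sup>+ x. ep (Gp x) (\<bar>indicator B x\<bar> / l) \<partial>lebesgue)"
    by (intro nn_integral_mono pt)
  finally have I: "ennreal k \<le> (\<integral>\<^sup>+ x. ep (Gp x) (\<bar>indicator B x\<bar> / l) \<partial>lebesgue)" .
  have "1 < ennreal k" using k by simp
  then show "(\<integral>\<^sup>+ x. ep (Gp x) (\<bar>indicator B x\<bar> / l) \<partial>lebesgue) > 1"
    using I by (rule less_le_trans)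
qed

lemma half_ennreal: "(x::ennreal) / 2 = ennreal (1/2) * x"
  by (simp add: divide_ennreal_def mult.commute)

lemma ennreal_half_two: "ennreal (1/2) * (1 + 1) = 1"
proof -
  have "(1::ennreal) + 1 = ennreal 2" by simp
  then have "ennreal (1/2) * (1 + 1) = ennreal (1/2 * 2)" by (simp only: ennreal_mult[symmetric])
  then show ?thesis by simp
qed

lemma ball_est3:
  fixes B :: "'a::euclidean_space set" and Ga Gp f :: "'a \<Rightarrow> real"
  assumes B: "B \<in> sets lebesgue" "emeasure lebesgue B = ennreal V" "V > 0"
    and M: "M \<ge> 1" "\<And>e. V powr e \<le> M powr \<bar>e\<bar>"
    and G: "\<And>x. 0 \<le> Ga x" "\<And>x. Ga x \<le> Gp x" "\<And>x. Gp x \<le> 1"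
    and Gm: "Ga \<in> borel_measurable lebesgue"
    and osc: "\<And>x. x \<in> B \<Longrightarrow> \<bar>Ga x - a0\<bar> \<le> \<delta>" "\<And>x. x \<in> B \<Longrightarrow> \<bar>Gp x - g0\<bar> \<le> \<delta>"
    and f: "f \<in> borel_measurable lebesgue" "\<And>x. x \<notin> B \<Longrightarrow> f x = 0"
  shows "LN Gp f \<le> ereal (2 * (V powr (g0 - a0) * M powr (2*\<delta>))) * LN Ga f"
proof -
  define \<sigma> where "\<sigma> = V powr (g0 - a0) * M powr (2*\<delta>)"
  have \<sigma>: "\<sigma> > 0" using B M by (simp add: \<sigma>_def)
  have key: "LN Gp f \<le> ereal (2*\<sigma>*lam)" if lamh: "LN Ga f < ereal lam" for lam
  proof -
    have l0: "lam > 0" by (rule LN_less(1)[OF lamh G(1)])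
    have I: "(\<integral>\<^sup>+ x. ep (Ga x) (\<bar>f x\<bar> / lam) \<partial>lebesgue) \<le> 1" by (rule LN_less(2)[OF lamh G(1)])
    have pt: "ep (Gp x) (\<bar>f x\<bar> / (2*\<sigma>*lam)) \<le> ennreal (1/2) * (ep (Ga x) (\<bar>f x\<bar> / lam) + ennreal (1/V) * indicator B x)" for x
    proof (cases "x \<in> B")
      case False then show ?thesis using f(2)[of x] by simp
    next
      case True
      have gx: "0 \<le> Gp x" "Gp x \<le> 1" using G[of x] by auto
      have "\<bar>(Gp x - Ga x) - (g0 - a0)\<bar> \<le> 2*\<delta>" using osc(1)[OF True] osc(2)[OF True] by linarith
      then have "V powr ((Gp x - Ga x) - (g0 - a0)) \<le> M powr (2*\<delta>)" by (rule powr_dev[OF M(1) M(2)])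
      then have "V powr (g0 - a0) * V powr ((Gp x - Ga x) - (g0 - a0)) \<le> \<sigma>"
        unfolding \<sigma>_def by (rule mult_left_mono) simp
      moreover have "V powr (g0 - a0) * V powr ((Gp x - Ga x) - (g0 - a0)) = V powr (Gp x - Ga x)"
        using B(3) by (simp add: powr_add[symmetric])
      ultimately have sv: "V powr (Gp x - Ga x) \<le> \<sigma>" by simp
      have e3: "ep (Gp x - Ga x) (1/\<sigma>) \<le> ennreal (1/V)"
        using B(3) \<sigma> sv G[of x] by (intro ep_upper) auto
      have eq2: "\<bar>f x\<bar> / (2*\<sigma>*lam) = (\<bar>f x\<bar> / (\<sigma>*lam)) / 2" by simp
      have "ep (Gp x) (\<bar>f x\<bar> / (2*\<sigma>*lam)) \<le> ep (Gp x) (\<bar>f x\<bar> / (\<sigma>*lam)) / 2"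
        unfolding eq2 using gx \<sigma> l0 by (intro ep_half) auto
      also have "\<dots> = ennreal (1/2) * ep (Gp x) (\<bar>f x\<bar> / (\<sigma>*lam))" by (rule half_ennreal)
      also have "ep (Gp x) (\<bar>f x\<bar> / (\<sigma>*lam)) = ep (Ga x + (Gp x - Ga x)) ((\<bar>f x\<bar> / lam) * (1/\<sigma>))"
        by (simp add: mult.commute)
      also have "\<dots> \<le> ep (Ga x) (\<bar>f x\<bar> / lam) + ep (Gp x - Ga x) (1/\<sigma>)"
        using G[of x] \<sigma> l0 by (intro ep_young) auto
      also have "\<dots> \<le> ep (Ga x) (\<bar>f x\<bar> / lam) + ennreal (1/V)"
        using e3 by (rule add_left_mono)
      finally show ?thesis using True by (simp add: mult_left_mono)
    qed
    have mF: "(\<lambda>x. ep (Ga x) (\<bar>f x\<bar> / lam)) \<in> borel_measurable lebesgue" using Gm f(1) by measurable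
    have mG: "(\<lambda>x. ennreal (1/V) * indicator B x) \<in> borel_measurable lebesgue" using B(1) by measurable
    have "(\<integral>\<^sup>+ x. ep (Gp x) (\<bar>f x\<bar> / (2*\<sigma>*lam)) \<partial>lebesgue)
        \<le> (\<integral>\<^sup>+ x. ennreal (1/2) * (ep (Ga x) (\<bar>f x\<bar> / lam) + ennreal (1/V) * indicator B x) \<partial>lebesgue)"
      by (intro nn_integral_mono pt)
    also have "\<dots> = ennreal (1/2) * ((\<integral>\<^sup>+ x. ep (Ga x) (\<bar>f x\<bar> / lam) \<partial>lebesgue) + (\<integral>\<^sup>+ x. ennreal (1/V) * indicator B x \<partial>lebesgue))"
      using mF mG by (simp add: nn_integral_cmult nn_integral_add)
    also have "(\<integral>\<^sup>+ x. ennreal (1/V) * indicator B x \<partial>lebesgue) = 1"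
    proof -
      have "(\<integral>\<^sup>+ x. ennreal (1/V) * indicator B x \<partial>lebesgue) = ennreal (1/V) * ennreal V"
        using B by (simp add: nn_integral_cmult_indicator)
      also have "\<dots> = ennreal (1/V * V)" using B by (intro ennreal_mult[symmetric]) auto
      also have "\<dots> = 1" using B by simp
      finally show ?thesis .
    qed
    also have "ennreal (1/2) * ((\<integral>\<^sup>+ x. ep (Ga x) (\<bar>f x\<bar> / lam) \<partial>lebesgue) + 1) \<le> ennreal (1/2) * (1 + 1)"
      using I by (intro mult_left_mono add_right_mono) auto
    also have "\<dots> = 1" by (rule ennreal_half_two)
    finally show ?thesis using \<sigma> l0 by (intro LN_le) auto
  qed
  show ?thesis unfolding \<sigma>_def[symmetric]
  proof (cases "LN Ga f")
    case (real x)
    show "LN Gp f \<le> ereal (2 * \<sigma>) * LN Ga f"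
    proof (rule ccontr)
      assume "\<not> ?thesis"
      then have "ereal (2*\<sigma>*x) < LN Gp f" using real by (simp add: mult.assoc)
      then obtain z where z: "ereal (2*\<sigma>*x) < ereal z" "ereal z < LN Gp f" using ereal_dense2 by blast
      have "x < z / (2*\<sigma>)" using z(1) \<sigma> by (simp add: field_simps)
      then have "LN Ga f < ereal (z / (2*\<sigma>))" using real by simp
      then have "LN Gp f \<le> ereal (2*\<sigma>*(z / (2*\<sigma>)))" by (rule key)
      also have "2*\<sigma>*(z / (2*\<sigma>)) = z" using \<sigma> by simp
      finally show False using z(2) by simp
    qed
  next
    case PInf then show "LN Gp f \<le> ereal (2 * \<sigma>) * LN Ga f" using \<sigma> by simp
  next
    case MInf then show "LN Gp f \<le> ereal (2 * \<sigma>) * LN Ga f" using LN_nonneg[of Ga f] by simp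
  qed
qed

lemma log_holder_real:
  assumes "log_holder p"
  obtains P C pinf where "\<And>x. p x = ereal (P x)" "\<And>x. 1 \<le> P x" "P \<in> borel_measurable lebesgue" "C \<ge> 0"
    "\<And>x y. dist x y < 1/2 \<Longrightarrow> \<bar>P x - P y\<bar> \<le> - C / ln (dist x y)"
    "\<And>x. \<bar>P x - pinf\<bar> \<le> C / ln (exp 1 + norm x)"
proof -
  from assms obtain C pinf :: real where
    pm: "p \<in> borel_measurable lebesgue" and p1: "\<And>x. 1 \<le> p x" and
    loc: "\<And>x y. dist x y < 1/2 \<Longrightarrow> \<bar>p x - p y\<bar> \<le> ereal (- C / ln (dist x y))" and
    dec: "\<And>x. \<bar>p x - ereal pinf\<bar> \<le> ereal (C / ln (exp 1 + norm x))"
    unfolding log_holder_def var_exp_def by blast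
  define P where "P x = real_of_ereal (p x)" for x
  have fin: "p x = ereal (P x)" for x
  proof -
    have "p x \<noteq> \<infinity>"
    proof
      assume "p x = \<infinity>"
      then show False using dec[of x] by simp
    qed
    moreover have "p x \<noteq> -\<infinity>" using p1[of x] by auto
    ultimately show ?thesis unfolding P_def by (cases "p x") auto
  qed
  have P1: "1 \<le> P x" for x using p1[of x] fin[of x] by simp
  have Pm: "P \<in> borel_measurable lebesgue" unfolding P_def using pm by measurable
  have locP: "\<bar>P x - P y\<bar> \<le> - C / ln (dist x y)" if "dist x y < 1/2" for x y
    using loc[OF that] fin[of x] fin[of y] by simp
  have decP: "\<bar>P x - pinf\<bar> \<le> C / ln (exp 1 + norm x)" for x
    using dec[of x] fin[of x] by simp
  have "C \<ge> 0" using decP[of 0] by simp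
  then show ?thesis using that fin P1 Pm locP decP by blast
qed

lemma G_diff:
  fixes a b :: real
  assumes "1 \<le> a" "1 \<le> b"
  shows "\<bar>(1 - 1/a) - (1 - 1/b)\<bar> \<le> \<bar>a - b\<bar>" "\<bar>(1 - 1/a) - (1 - 1/b)\<bar> \<le> 1"
    "0 \<le> 1 - 1/a" "1 - 1/a \<le> 1"
proof -
  have e: "(1 - 1/a) - (1 - 1/b) = (a - b) / (a*b)" using assms by (simp add: field_simps)
  have "1 * 1 \<le> a * b" by (rule mult_mono) (use assms in auto)
  then have ab: "a * b \<ge> 1" by simp
  have le: "\<bar>a - b\<bar> / (a*b) \<le> \<bar>a - b\<bar> / 1" by (rule divide_left_mono) (use ab in auto)
  have abs_ab: "\<bar>a*b\<bar> = a*b" using ab by simp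
  show "\<bar>(1 - 1/a) - (1 - 1/b)\<bar> \<le> \<bar>a - b\<bar>" unfolding e abs_divide abs_ab using le by simp
  have f: "0 < 1/a" "1/a \<le> 1" "0 < 1/b" "1/b \<le> 1" using assms by auto
  show "\<bar>(1 - 1/a) - (1 - 1/b)\<bar> \<le> 1" unfolding abs_le_iff
  proof (intro conjI)
    show "(1 - 1/a) - (1 - 1/b) \<le> 1" using f by linarith
    show "- ((1 - 1/a) - (1 - 1/b)) \<le> 1" using f by linarith
  qed
  show "0 \<le> 1 - 1/a" using f by linarith
  show "1 - 1/a \<le> 1" using f by linarith
qed

lemma osc_small:
  fixes h :: "'a::euclidean_space \<Rightarrow> real"
  assumes C: "C \<ge> 0" and loc: "\<And>x y. dist x y < 1/2 \<Longrightarrow> \<bar>h x - h y\<bar> \<le> - C / ln (dist x y)"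
    and y: "y \<in> ball x0 r" and r: "r < 1/4"
  shows "\<bar>h y - h x0\<bar> \<le> - C / ln r"
proof -
  define d where "d = dist x0 y"
  have d: "d < r" "0 \<le> d" using y by (auto simp: d_def)
  have r0: "r > 0" using d by simp
  have lnr: "ln r < 0" using r r0 by simp
  have pos: "0 \<le> - C / ln r" using lnr C by (simp add: divide_nonneg_neg)
  have h1: "\<bar>h x0 - h y\<bar> \<le> - C / ln d" using loc[of x0 y] d r unfolding d_def by simp
  show ?thesis
  proof (cases "d = 0")
    case True
    then show ?thesis using h1 pos by (simp add: abs_minus_commute)
  next
    case False
    then have d0: "d > 0" using d by simp
    have ldr: "ln d < ln r" using d0 d by simp
    then have ld: "ln d < 0" using lnr by simp
    have "0 < (- ln d) * (- ln r)" using ld lnr by (intro mult_pos_pos) auto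
    then have "C / (- ln d) \<le> C / (- ln r)" using ldr C by (intro divide_left_mono) auto
    then have "- C / ln d \<le> - C / ln r" by (simp add: divide_minus_right)
    then show ?thesis using h1 by (simp add: abs_minus_commute)
  qed
qed

lemma osc_mid:
  fixes h :: "'a::euclidean_space \<Rightarrow> real"
  assumes C: "C \<ge> 0" and dec: "\<And>x. \<bar>h x - hinf\<bar> \<le> C / ln (exp 1 + norm x)"
    and y: "y \<in> ball x0 r" and r: "r \<le> norm x0 / 2" "r > 0"
  shows "\<bar>h y - h x0\<bar> \<le> 2 * C / ln (exp 1 + r)"
proof -
  have "dist x0 y < r" using y by simp
  then have ny: "norm y \<ge> r" using r norm_triangle_ineq2[of x0 y] by (simp add: dist_norm)
  have nx: "norm x0 \<ge> r" using r by simp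
  have "1 < exp (1::real)" by simp
  then have "1 < exp 1 + r" using r by linarith
  then have lr: "ln (exp 1 + r) > 0" by (rule ln_gt_zero)
  have mono: "C / ln (exp 1 + norm z) \<le> C / ln (exp 1 + r)" if "norm z \<ge> r" for z :: 'a
  proof -
    have p1: "0 < exp 1 + r" using r by (simp add: add_pos_pos)
    have p2: "0 < exp 1 + norm z" by (simp add: add_pos_nonneg)
    have "exp 1 + r \<le> exp 1 + norm z" using that by simp
    then have "ln (exp 1 + r) \<le> ln (exp 1 + norm z)" using p1 p2 by (subst ln_le_cancel_iff) auto
    then show ?thesis using lr C by (intro divide_left_mono) auto
  qed
  have "\<bar>h y - h x0\<bar> \<le> \<bar>h y - hinf\<bar> + \<bar>h x0 - hinf\<bar>" by linarith
  also have "\<dots> \<le> C / ln (exp 1 + r) + C / ln (exp 1 + r)"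
    using dec[of y] dec[of x0] mono[OF ny] mono[OF nx] by linarith
  finally show ?thesis by simp
qed

lemma M_props:
  fixes V :: real
  assumes "V > 0"
  shows "max V (1/V) \<ge> 1" "\<And>e. V powr e \<le> (max V (1/V)) powr \<bar>e\<bar>" "ln (max V (1/V)) = \<bar>ln V\<bar>"
proof -
  show "max V (1/V) \<ge> 1"
  proof (cases "V \<ge> 1")
    case True then show ?thesis by simp
  next
    case False then have "1/V > 1" using assms by simp
    then show ?thesis by simp
  qed
  show "V powr e \<le> (max V (1/V)) powr \<bar>e\<bar>" for e
  proof (cases "V \<ge> 1")
    case True
    have "1/V \<le> 1" using True by simp
    then have "max V (1/V) = V" using True by (intro max_absorb1) linarith
    moreover have "V powr e \<le> V powr \<bar>e\<bar>" using True by (intro Transcendental.powr_mono) auto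
    ultimately show ?thesis by simp
  next
    case False
    then have iv: "1/V > 1" using assms by simp
    then have mx: "max V (1/V) = 1/V" using False by simp
    have "(1/V) powr (-e) = 1 powr (-e) / V powr (-e)" by (rule powr_divide)
    also have "\<dots> = 1 / V powr (-e)" by simp
    also have "\<dots> = V powr e" by (simp add: powr_minus_divide[of V "-e", symmetric])
    finally have "V powr e = (1/V) powr (-e)" by simp
    moreover have "(1/V) powr (-e) \<le> (1/V) powr \<bar>e\<bar>" using iv by (intro Transcendental.powr_mono) auto
    ultimately show ?thesis using mx by simp
  qed
  show "ln (max V (1/V)) = \<bar>ln V\<bar>"
  proof (cases "V \<ge> 1")
    case True
    have "1/V \<le> 1" using True by simp
    then have "max V (1/V) = V" using True by (intro max_absorb1) linarith
    then show ?thesis using True by simp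
  next
    case False
    then have iv: "1/V > 1" using assms by simp
    then have "max V (1/V) = 1/V" using False by simp
    moreover have "ln V < 0" using False assms by simp
    ultimately show ?thesis using assms by (simp add: ln_div)
  qed
qed

lemma bound_AB:
  fixes r \<omega> n C \<delta> :: real
  assumes \<omega>: "\<omega> > 0" and n: "n \<ge> 1" and r: "r > 0" and \<delta>: "0 \<le> \<delta>" "\<delta> \<le> 1" and C: "C \<ge> 0"
    and cs: "(r < 1/4 \<and> \<delta> \<le> - C / ln r) \<or> (1/4 \<le> r \<and> \<delta> \<le> 2 * C / ln (exp 1 + r))"
  shows "(max (\<omega> * r powr n) (1 / (\<omega> * r powr n))) powr (4*\<delta>) \<le> exp (4 * \<bar>ln \<omega>\<bar> + 4 * n * (ln 4 + 2 * C))"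
proof -
  define V where "V = \<omega> * r powr n"
  define M where "M = max V (1/V)"
  have V: "V > 0" using \<omega> r by (simp add: V_def)
  have M1: "M \<ge> 1" unfolding M_def by (rule M_props(1)[OF V])
  have lnM: "ln M = \<bar>ln V\<bar>" unfolding M_def by (rule M_props(3)[OF V])
  have lnV: "ln V = ln \<omega> + n * ln r" using \<omega> r by (simp add: V_def ln_mult ln_powr)
  have an: "\<bar>n * ln r\<bar> = n * \<bar>ln r\<bar>" using n by (simp add: abs_mult)
  have "\<bar>ln \<omega> + n * ln r\<bar> \<le> \<bar>ln \<omega>\<bar> + \<bar>n * ln r\<bar>" by (rule abs_triangle_ineq)
  then have lnM2: "ln M \<le> \<bar>ln \<omega>\<bar> + n * \<bar>ln r\<bar>" unfolding lnM lnV an .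
  have key: "\<delta> * \<bar>ln r\<bar> \<le> ln 4 + 2 * C"
    using cs
  proof
    assume A: "r < 1/4 \<and> \<delta> \<le> - C / ln r"
    then have lr: "ln r < 0" using r by simp
    have pos: "- ln r > 0" using lr by simp
    have "- C / ln r = C / (- ln r)" by (simp add: divide_minus_right)
    then have "\<delta> \<le> C / (- ln r)" using A by simp
    then have "\<delta> * (- ln r) \<le> C" by (simp only: pos_le_divide_eq[OF pos])
    moreover have "\<bar>ln r\<bar> = - ln r" using lr by simp
    ultimately have "\<delta> * \<bar>ln r\<bar> \<le> C" by simp
    moreover have "ln (4::real) \<ge> 0" by simp
    ultimately show ?thesis using C by linarith
  next
    assume B: "1/4 \<le> r \<and> \<delta> \<le> 2 * C / ln (exp 1 + r)"
    have "1 < exp (1::real)" by simp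
    then have "1 < exp 1 + r" using r by linarith
    then have le0: "ln (exp 1 + r) > 0" by (rule ln_gt_zero)
    have ab: "\<bar>ln r\<bar> \<le> ln 4 + ln (exp 1 + r)"
    proof (cases "r \<le> 1")
      case True
      have "ln r \<le> 0" using True r by simp
      moreover have "ln (1/4) \<le> ln r" using B r by (subst ln_le_cancel_iff) auto
      moreover have "ln (1/4::real) = - ln 4" by (simp add: ln_div)
      ultimately show ?thesis using le0 by linarith
    next
      case False
      have "ln r \<le> ln (exp 1 + r)" using r by (subst ln_le_cancel_iff) (auto simp: add_pos_pos)
      moreover have "ln r \<ge> 0" using False by simp
      moreover have "ln (4::real) \<ge> 0" by simp
      ultimately show ?thesis by linarith
    qed
    have "\<delta> * \<bar>ln r\<bar> \<le> \<delta> * (ln 4 + ln (exp 1 + r))" using ab \<delta> by (intro mult_left_mono) auto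
    also have "\<dots> = \<delta> * ln 4 + \<delta> * ln (exp 1 + r)" by (simp add: algebra_simps)
    also have "\<delta> * ln 4 \<le> ln 4" using \<delta> by (simp add: mult_left_le_one_le)
    also have "\<delta> * ln (exp 1 + r) \<le> 2 * C"
    proof -
      have "\<delta> \<le> 2 * C / ln (exp 1 + r)" using B by blast
      then show ?thesis by (simp only: pos_le_divide_eq[OF le0])
    qed
    finally show ?thesis by simp
  qed
  have "4 * \<delta> * ln M \<le> 4 * \<delta> * (\<bar>ln \<omega>\<bar> + n * \<bar>ln r\<bar>)" using lnM2 \<delta> by (intro mult_left_mono) auto
  also have "\<dots> = 4 * (\<delta> * \<bar>ln \<omega>\<bar>) + 4 * n * (\<delta> * \<bar>ln r\<bar>)" by (simp add: algebra_simps)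
  also have "\<dots> \<le> 4 * \<bar>ln \<omega>\<bar> + 4 * n * (ln 4 + 2 * C)"
  proof (intro add_mono mult_left_mono)
    show "\<delta> * \<bar>ln \<omega>\<bar> \<le> \<bar>ln \<omega>\<bar>" using \<delta> by (simp add: mult_left_le_one_le)
    show "\<delta> * \<bar>ln r\<bar> \<le> ln 4 + 2 * C" by (rule key)
  qed (use n in auto)
  finally have "4 * \<delta> * ln M \<le> 4 * \<bar>ln \<omega>\<bar> + 4 * n * (ln 4 + 2 * C)" .
  moreover have "M powr (4*\<delta>) = exp (4 * \<delta> * ln M)" using M1 by (simp add: powr_def mult.commute)
  ultimately show ?thesis unfolding M_def[symmetric] V_def[symmetric] by simp
qed

lemma bound_C:
  fixes r \<omega> n c N \<rho>0 \<rho>x nx \<delta> :: real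
  assumes \<omega>: "\<omega> > 0" and n: "n \<ge> 1" and c: "c \<ge> 1" and N: "N \<ge> 1" and \<rho>0: "\<rho>0 > 0" and \<rho>x: "\<rho>x > 0"
    and h\<rho>: "\<rho>x \<le> c * \<rho>0 * (1 + nx / \<rho>0) powr (N / (N + 1))"
    and nx: "0 \<le> nx" "nx < 2 * r" and r: "1/4 \<le> r" and \<delta>: "0 \<le> \<delta>" "\<delta> \<le> 1"
  shows "(max (\<omega> * r powr n) (1 / (\<omega> * r powr n))) powr (4*\<delta>)
     \<le> ((\<omega> + 4 powr n / \<omega>) powr 4 * (max 1 (\<rho>0/2)) powr (4*n) * (2*c) powr (4*n*(N+1)))
        * (1 + r / \<rho>x) powr (4*n*(N+1))"
proof -
  define s where "s = N / (N + 1)"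
  define u where "u = 1 + 2 * r / \<rho>0"
  define \<theta> where "\<theta> = 4*n*(N+1)"
  define W where "W = \<omega> + 4 powr n / \<omega>"
  define k where "k = max 1 (\<rho>0/2)"
  define m where "m = max 1 r"
  define V where "V = \<omega> * r powr n"
  define M where "M = max V (1/V)"
  define X where "X = u powr (1 - s)"
  have r0: "r > 0" using r by simp
  have s: "0 \<le> s" "s < 1" using N by (auto simp: s_def)
  have s1: "1 - s = 1 / (N + 1)" using N by (simp add: s_def field_simps)
  have u1: "u \<ge> 1" using r0 \<rho>0 by (simp add: u_def)
  have ru: "r = \<rho>0 * (u - 1) / 2" using \<rho>0 by (simp add: u_def field_simps)
  have "(1 + nx / \<rho>0) \<le> u" using nx \<rho>0 by (simp add: u_def divide_right_mono)
  then have "(1 + nx / \<rho>0) powr s \<le> u powr s" using s nx \<rho>0 by (intro powr_mono2) auto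
  then have "c * \<rho>0 * (1 + nx / \<rho>0) powr s \<le> c * \<rho>0 * u powr s" using c \<rho>0 by (intro mult_left_mono) auto
  then have \<rho>u: "\<rho>x \<le> c * \<rho>0 * u powr s" using h\<rho> unfolding s_def by linarith
  have us: "u powr s \<ge> 1" using u1 s by (intro ge_one_powr_ge_zero) auto
  have "r / (c * \<rho>0 * u powr s) \<le> r / \<rho>x"
    using \<rho>u \<rho>x r0 by (intro divide_left_mono) auto
  moreover have "r / (c * \<rho>0 * u powr s) = (u / u powr s - 1 / u powr s) / (2 * c)"
  proof -
    have us0: "u powr s \<noteq> 0" using us by linarith
    have c0: "c \<noteq> 0" using c by simp
    have r0': "\<rho>0 \<noteq> 0" using \<rho>0 by simp
    show ?thesis unfolding ru using us0 c0 r0' by (simp add: field_simps)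
  qed
  moreover have "u / u powr s = X"
  proof -
    have "u / u powr s = u powr 1 / u powr s" using u1 by simp
    also have "\<dots> = u powr (1 - s)" using u1 by (simp add: powr_diff)
    finally show ?thesis by (simp add: X_def)
  qed
  moreover have "1 / u powr s \<le> 1"
  proof -
    have "1 / u powr s \<le> 1 / 1" using us by (intro divide_left_mono) auto
    then show ?thesis by simp
  qed
  ultimately have "(X - 1) / (2 * c) \<le> r / \<rho>x" using c
    by (smt (verit, best) divide_right_mono)
  moreover have "X / (2 * c) \<le> 1 + (X - 1) / (2 * c)"
  proof -
    have "1 / (2 * c) \<le> 1" using c by simp
    moreover have "(X - 1) / (2 * c) = X / (2*c) - 1 / (2 * c)" by (simp add: diff_divide_distrib)
    ultimately show ?thesis by linarith
  qed
  ultimately have "X / (2 * c) \<le> 1 + r / \<rho>x" by linarith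
  moreover have c2: "0 < 2 * c" using c by simp
  ultimately have "X \<le> (1 + r / \<rho>x) * (2 * c)" by (simp only: pos_divide_le_eq[OF c2])
  then have Xle: "X \<le> 2 * c * (1 + r / \<rho>x)" by (simp only: mult.commute)
  have X0: "X \<ge> 0" by (simp add: X_def)
  have "u powr (4*n) = X powr \<theta>"
  proof -
    have "X powr \<theta> = u powr ((1 - s) * \<theta>)" using u1 by (simp add: X_def powr_powr)
    also have "(1 - s) * \<theta> = 4 * n" using N by (simp add: s1 \<theta>_def)
    finally show ?thesis by simp
  qed
  also have "X powr \<theta> \<le> (2 * c * (1 + r / \<rho>x)) powr \<theta>"
    using Xle X0 n N by (intro powr_mono2) (auto simp: \<theta>_def)
  also have "\<dots> = (2 * c) powr \<theta> * (1 + r / \<rho>x) powr \<theta>"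
    using c r0 \<rho>x by (intro powr_mult)
  finally have U: "u powr (4*n) \<le> (2 * c) powr \<theta> * (1 + r / \<rho>x) powr \<theta>" .
  have m1: "m \<ge> 1" by (simp add: m_def)
  have mpow: "m powr n \<ge> 1" using m1 n by (intro ge_one_powr_ge_zero) auto
  have V0: "V > 0" using \<omega> r0 by (simp add: V_def)
  have "V \<le> \<omega> * m powr n" unfolding V_def using \<omega> r0 n
    by (intro mult_left_mono powr_mono2) (auto simp: m_def)
  also have "\<dots> \<le> W * m powr n" unfolding W_def using \<omega> mpow by (intro mult_right_mono) auto
  finally have VW: "V \<le> W * m powr n" .
  have "(1/4) powr n \<le> r powr n" using r n by (intro powr_mono2) auto
  then have "1 / r powr n \<le> 1 / (1/4) powr n" using r0 by (intro divide_left_mono) auto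
  also have "1 / (1/4::real) powr n = 4 powr n" by (simp add: powr_divide)
  finally have "1 / r powr n \<le> 4 powr n" .
  then have "1 / V \<le> 4 powr n / \<omega>" unfolding V_def using \<omega> by (simp add: divide_right_mono field_simps)
  also have "\<dots> \<le> (4 powr n / \<omega>) * m powr n"
  proof -
    have "(4 powr n / \<omega>) * 1 \<le> (4 powr n / \<omega>) * m powr n" using mpow \<omega> by (intro mult_left_mono) auto
    then show ?thesis by simp
  qed
  also have "\<dots> \<le> W * m powr n" unfolding W_def using \<omega> mpow by (intro mult_right_mono) auto
  finally have IW: "1 / V \<le> W * m powr n" .
  have MW: "M \<le> W * m powr n" using VW IW by (simp add: M_def)
  have "m \<le> k * u"
  proof -
    have "r \<le> (\<rho>0 / 2) * u" unfolding ru using \<rho>0 by (simp add: field_simps)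
    also have "\<dots> \<le> k * u" using u1 by (intro mult_right_mono) (auto simp: k_def)
    finally have "r \<le> k * u" .
    moreover have "1 * 1 \<le> k * u" using u1 by (intro mult_mono) (auto simp: k_def)
    ultimately show ?thesis by (simp add: m_def)
  qed
  then have "m powr n \<le> (k * u) powr n" using m1 n by (intro powr_mono2) auto
  also have "\<dots> = k powr n * u powr n" using u1 by (intro powr_mult)
  finally have mk: "m powr n \<le> k powr n * u powr n" .
  have M1: "M \<ge> 1" unfolding M_def by (rule M_props(1)[OF V0])
  have "M powr (4*\<delta>) \<le> M powr 4" using M1 \<delta> by (intro Transcendental.powr_mono) auto
  also have "\<dots> \<le> (W * (k powr n * u powr n)) powr 4"
  proof (intro powr_mono2)
    have W0: "W \<ge> 0" using \<omega> by (simp add: W_def)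
    have "W * m powr n \<le> W * (k powr n * u powr n)" using mk W0 by (intro mult_left_mono) auto
    then show "M \<le> W * (k powr n * u powr n)" using MW by linarith
  qed (use M1 in auto)
  also have "\<dots> = W powr 4 * k powr (4*n) * u powr (4*n)"
    using \<omega> u1 by (simp add: powr_mult powr_powr W_def k_def mult.commute mult.left_commute)
  also have "\<dots> \<le> W powr 4 * k powr (4*n) * ((2 * c) powr \<theta> * (1 + r / \<rho>x) powr \<theta>)"
    using U by (intro mult_left_mono) auto
  finally show ?thesis unfolding M_def V_def W_def k_def \<theta>_def by (simp add: mult.assoc)
qed

lemma ball_measure:
  fixes x0 :: "'a::euclidean_space"
  assumes "r > 0"
  shows "emeasure lebesgue (ball x0 r) = ennreal (unit_ball_vol (real DIM('a)) * r powr real DIM('a))"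
proof -
  have "emeasure lebesgue (ball x0 r) = emeasure lborel (ball x0 r)" by simp
  also have "\<dots> = ennreal (unit_ball_vol (real DIM('a)) * r ^ DIM('a))"
    using assms by (intro emeasure_ball) auto
  also have "r ^ DIM('a) = r powr real DIM('a)" using assms by (simp add: powr_realpow)
  finally show ?thesis .
qed

lemma weight_meas:
  assumes "weight w"
  shows "(\<lambda>y. indicator (ball x0 r) y / w y) \<in> borel_measurable lebesgue"
proof -
  have "set_integrable lebesgue (cball x0 r) w" using assms by (simp add: weight_def)
  then have m: "(\<lambda>y. indicator (cball x0 r) y *\<^sub>R w y) \<in> borel_measurable lebesgue"
    unfolding set_integrable_def by (rule borel_measurable_integrable)
  have "(\<lambda>y. indicator (ball x0 r) y / w y) = (\<lambda>y. indicator (ball x0 r) y / (indicator (cball x0 r) y *\<^sub>R w y))"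
    by (rule ext) (auto simp: indicator_def)
  also have "\<dots> \<in> borel_measurable lebesgue"
  proof -
    have mb: "ball x0 r \<in> sets lebesgue" by (rule fmeasurableD[OF lmeasurable_ball])
    show ?thesis by (rule borel_measurable_divide[OF borel_measurable_indicator[OF mb] m])
  qed
  finally show ?thesis .
qed

lemma Linf_nonneg: "Linf_norm (f :: 'a::euclidean_space \<Rightarrow> real) \<ge> 0"
proof -
  have "emeasure lebesgue (UNIV :: 'a set) \<noteq> 0" by simp
  then have "esssup lebesgue (\<lambda>x::'a. 0::ereal) = 0" using esssup_const[of lebesgue "0::ereal"] by simp
  moreover have "esssup lebesgue (\<lambda>x::'a. 0::ereal) \<le> esssup lebesgue (\<lambda>x. ereal \<bar>f x\<bar>)"
    by (intro esssup_mono) auto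
  ultimately show ?thesis unfolding Linf_norm_def by simp
qed

lemma per_ball:
  fixes B :: "'a::euclidean_space set" and Ga Gp f :: "'a \<Rightarrow> real"
  assumes B: "B \<in> sets lebesgue" "emeasure lebesgue B = ennreal V" "V > 0"
    and G: "\<And>x. 0 \<le> Ga x" "\<And>x. Ga x \<le> Gp x" "\<And>x. Gp x \<le> 1"
    and Gm: "Ga \<in> borel_measurable lebesgue"
    and osc: "\<And>x. x \<in> B \<Longrightarrow> \<bar>Ga x - a0\<bar> \<le> \<delta>" "\<And>x. x \<in> B \<Longrightarrow> \<bar>Gp x - g0\<bar> \<le> \<delta>"
    and f: "f \<in> borel_measurable lebesgue" "\<And>x. x \<notin> B \<Longrightarrow> f x = 0"
    and A: "A \<ge> 0"
    and hyp: "A * LN Ga f \<le> ereal C0 * LN Ga (indicator B) * ereal T"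
    and C0: "C0 > 0" and T: "T \<ge> 0"
    and Mb: "(max V (1/V)) powr (4*\<delta>) \<le> K * T0" and K: "K > 0" and T0: "T0 \<ge> 0"
  shows "A * LN Gp f \<le> ereal (2*C0*K) * LN Gp (indicator B) * ereal (T * T0)"
proof -
  define M where "M = max V (1/V)"
  have M1: "M \<ge> 1" unfolding M_def by (rule M_props(1)[OF B(3)])
  have M2: "\<And>e. V powr e \<le> M powr \<bar>e\<bar>" unfolding M_def by (rule M_props(2)[OF B(3)])
  have G1: "\<And>x. Ga x \<le> 1" using G by (meson order_trans)
  have G0: "\<And>x. 0 \<le> Gp x" using G by (meson order_trans)
  have h1: "LN Ga (indicator B) \<le> ereal (V powr a0 * M powr \<delta>)"
    by (rule ball_est1[OF B M1 M2 G(1) G1 osc(1)])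
  have h2: "ereal (V powr g0 * M powr (-\<delta>)) \<le> LN Gp (indicator B)"
    by (rule ball_est2[OF B M1 M2 G0 G(3) osc(2)])
  have h3: "LN Gp f \<le> ereal (2 * (V powr (g0 - a0) * M powr (2*\<delta>))) * LN Ga f"
    by (rule ball_est3[OF B M1 M2 G Gm osc f])
  define s where "s = 2 * (V powr (g0 - a0) * M powr (2*\<delta>))"
  have s0: "s \<ge> 0" by (simp add: s_def)
  have "A * LN Gp f \<le> A * (ereal s * LN Ga f)"
    using h3 A unfolding s_def by (rule ereal_mult_left_mono)
  also have "\<dots> = ereal s * (A * LN Ga f)" by (simp add: ac_simps)
  also have "\<dots> \<le> ereal s * (ereal C0 * LN Ga (indicator B) * ereal T)"
    using hyp s0 by (intro ereal_mult_left_mono) auto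
  also have "\<dots> \<le> ereal s * (ereal C0 * ereal (V powr a0 * M powr \<delta>) * ereal T)"
  proof (intro ereal_mult_left_mono ereal_mult_right_mono)
    show "LN Ga (indicator B) \<le> ereal (V powr a0 * M powr \<delta>)" by (rule h1)
  qed (use s0 C0 T in auto)
  also have "\<dots> = ereal (s * (C0 * (V powr a0 * M powr \<delta>) * T))" by simp
  also have "s * (C0 * (V powr a0 * M powr \<delta>) * T) \<le> (2*C0*K) * (V powr g0 * M powr (-\<delta>)) * (T * T0)"
  proof -
    have e1: "V powr (g0 - a0) * V powr a0 = V powr g0" using B(3) by (simp add: powr_add[symmetric])
    have e2: "M powr (2*\<delta>) * M powr \<delta> = M powr (-\<delta>) * M powr (4*\<delta>)" using M1
      by (simp add: powr_add[symmetric])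
    have "s * (C0 * (V powr a0 * M powr \<delta>) * T)
        = (2 * C0 * T * V powr g0 * M powr (-\<delta>)) * M powr (4*\<delta>)"
      unfolding s_def using e1 e2 by (simp add: ac_simps) (metis mult.assoc mult.left_commute)
    also have "\<dots> \<le> (2 * C0 * T * V powr g0 * M powr (-\<delta>)) * (K * T0)"
      using Mb C0 T unfolding M_def by (intro mult_left_mono) auto
    also have "\<dots> = (2*C0*K) * (V powr g0 * M powr (-\<delta>)) * (T * T0)" by (simp add: ac_simps)
    finally show ?thesis .
  qed
  also have "ereal ((2*C0*K) * (V powr g0 * M powr (-\<delta>)) * (T * T0))
      = ereal (2*C0*K) * ereal (V powr g0 * M powr (-\<delta>)) * ereal (T * T0)" by simp
  also have "\<dots> \<le> ereal (2*C0*K) * LN Gp (indicator B) * ereal (T * T0)"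
  proof (intro ereal_mult_left_mono ereal_mult_right_mono h2)
    show "0 \<le> ereal (T * T0)" using T T0 by simp
    show "0 \<le> ereal (2*C0*K)" using C0 K by simp
  qed
  finally show ?thesis by simp
qed

lemma loc_mono:
  fixes C C' d :: real
  assumes "C \<le> C'" "0 \<le> d" "d < 1/2" "x \<le> - C / ln d"
  shows "x \<le> - C' / ln d"
proof -
  have "ln d \<le> 0"
  proof (cases "d = 0")
    case False then show ?thesis using assms by simp
  qed simp
  then have "- C / ln d \<le> - C' / ln d" using assms(1) by (intro divide_right_mono_neg) auto
  then show ?thesis using assms(4) by linarith
qed

lemma dec_mono:
  fixes C C' :: real and y :: "'a::real_normed_vector"
  assumes "C \<le> C'" "x \<le> C / ln (exp 1 + norm y)"
  shows "x \<le> C' / ln (exp 1 + norm y)"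
proof -
  have "1 < exp (1::real)" by simp
  then have "1 \<le> exp 1 + norm y" by (smt (verit) norm_ge_zero)
  then have "ln (exp 1 + norm y) \<ge> 0" by simp
  then have "C / ln (exp 1 + norm y) \<le> C' / ln (exp 1 + norm y)" using assms(1) by (intro divide_right_mono)
  then show ?thesis using assms(2) by linarith
qed

theorem proposition9:
  fixes \<rho> :: "'a::euclidean_space \<Rightarrow> real"
    and p q :: "'a \<Rightarrow> ereal"
    and w :: "'a \<Rightarrow> real"
  assumes "critical_radius \<rho>"
    and "log_holder p" and "log_holder q"
    and "\<forall>x. q x \<le> p x"
    and "w \<in> A_rho_infty \<rho> q"
  shows "w \<in> A_rho_infty \<rho> p"
proof -
  from assms(1) obtain c N where c: "c \<ge> 1" "N \<ge> 1" and \<rho>pos: "\<And>x. \<rho> x > 0"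
    and crit: "\<And>x y. \<rho> y \<le> c * \<rho> x * (1 + dist x y / \<rho> x) powr (N / (N + 1))"
    unfolding critical_radius_def by blast
  obtain P Cp pp where P: "\<And>x. p x = ereal (P x)" "\<And>x. 1 \<le> P x" "P \<in> borel_measurable lebesgue" "Cp \<ge> 0"
    "\<And>x y. dist x y < 1/2 \<Longrightarrow> \<bar>P x - P y\<bar> \<le> - Cp / ln (dist x y)"
    "\<And>x. \<bar>P x - pp\<bar> \<le> Cp / ln (exp 1 + norm x)"
    by (rule log_holder_real[OF assms(2)]) blast
  obtain Q Cq pq where Q: "\<And>x. q x = ereal (Q x)" "\<And>x. 1 \<le> Q x" "Q \<in> borel_measurable lebesgue" "Cq \<ge> 0"
    "\<And>x y. dist x y < 1/2 \<Longrightarrow> \<bar>Q x - Q y\<bar> \<le> - Cq / ln (dist x y)"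
    "\<And>x. \<bar>Q x - pq\<bar> \<le> Cq / ln (exp 1 + norm x)"
    by (rule log_holder_real[OF assms(3)]) blast
  from assms(5) obtain \<theta> C0 where w: "weight w" and \<theta>: "\<theta> > 0" and C0: "C0 > 0"
    and hw: "\<And>x r. r > 0 \<Longrightarrow> Linf_norm (\<lambda>y. w y * indicator (ball x r) y)
        * lux_norm (conj_exp q) (\<lambda>y. indicator (ball x r) y / w y)
      \<le> ereal C0 * lux_norm (conj_exp q) (indicator (ball x r))
          * ereal ((1 + r / \<rho> x) powr \<theta>)"
    unfolding A_rho_infty_def by blast
  define Cc where "Cc = max Cp Cq"
  have Cc: "Cc \<ge> 0" "Cp \<le> Cc" "Cq \<le> Cc" using P(4) by (auto simp: Cc_def)
  define n where "n = real DIM('a)"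
  have n: "n \<ge> 1" using DIM_positive[where 'a='a] unfolding n_def by linarith
  define \<omega> where "\<omega> = unit_ball_vol n"
  have \<omega>: "\<omega> > 0" using n by (simp add: \<omega>_def)
  define \<rho>0 where "\<rho>0 = \<rho> 0"
  have \<rho>0: "\<rho>0 > 0" by (simp add: \<rho>0_def \<rho>pos)
  define \<theta>0 where "\<theta>0 = 4*n*(N+1)"
  have \<theta>0: "\<theta>0 \<ge> 0" using n c by (simp add: \<theta>0_def)
  define K1 where "K1 = exp (4 * \<bar>ln \<omega>\<bar> + 4 * n * (ln 4 + 2 * Cc))"
  define K2 where "K2 = (\<omega> + 4 powr n / \<omega>) powr 4 * (max 1 (\<rho>0/2)) powr (4*n) * (2*c) powr (4*n*(N+1))"
  define K where "K = K1 + K2"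
  have K1: "K1 > 0" by (simp add: K1_def)
  have K2: "K2 \<ge> 0" by (simp add: K2_def)
  have K: "K > 0" using K1 K2 by (simp add: K_def)
  define Ga where "Ga x = 1 - 1 / Q x" for x
  define Gp where "Gp x = 1 - 1 / P x" for x
  have QP: "Q x \<le> P x" for x
  proof -
    have "q x \<le> p x" using assms(4) by blast
    then show ?thesis unfolding P(1) Q(1) by simp
  qed
  have G: "\<And>x. 0 \<le> Ga x" "\<And>x. Ga x \<le> Gp x" "\<And>x. Gp x \<le> 1"
  proof -
    fix x
    show "0 \<le> Ga x" unfolding Ga_def using G_diff(3)[OF Q(2)[of x] Q(2)[of x]] .
    show "Gp x \<le> 1" unfolding Gp_def using G_diff(4)[OF P(2)[of x] P(2)[of x]] .
    have "1 / P x \<le> 1 / Q x" using QP[of x] Q(2)[of x] by (intro divide_left_mono) auto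
    then show "Ga x \<le> Gp x" unfolding Ga_def Gp_def by linarith
  qed
  have Gm: "Ga \<in> borel_measurable lebesgue" unfolding Ga_def using Q(3) by measurable
  have luxq: "\<And>g. lux_norm (conj_exp q) g = LN Ga g"
    unfolding Ga_def by (rule lux_LN[OF Q(1) Q(2)])
  have luxp: "\<And>g. lux_norm (conj_exp p) g = LN Gp g"
    unfolding Gp_def by (rule lux_LN[OF P(1) P(2)])
  have locP: "\<And>x y. dist x y < 1/2 \<Longrightarrow> \<bar>P x - P y\<bar> \<le> - Cc / ln (dist x y)"
    by (rule loc_mono[OF Cc(2) zero_le_dist _ P(5)]) auto
  have locQ: "\<And>x y. dist x y < 1/2 \<Longrightarrow> \<bar>Q x - Q y\<bar> \<le> - Cc / ln (dist x y)"
    by (rule loc_mono[OF Cc(3) zero_le_dist _ Q(5)]) auto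
  have decP: "\<And>x. \<bar>P x - pp\<bar> \<le> Cc / ln (exp 1 + norm x)"
    by (rule dec_mono[OF Cc(2) P(6)])
  have decQ: "\<And>x. \<bar>Q x - pq\<bar> \<le> Cc / ln (exp 1 + norm x)"
    by (rule dec_mono[OF Cc(3) Q(6)])
  have main: "Linf_norm (\<lambda>y. w y * indicator (ball x0 r) y)
        * lux_norm (conj_exp p) (\<lambda>y. indicator (ball x0 r) y / w y)
      \<le> ereal (2*C0*K) * lux_norm (conj_exp p) (indicator (ball x0 r))
          * ereal ((1 + r / \<rho> x0) powr (\<theta> + \<theta>0))" if r: "r > 0" for x0 r
  proof -
    define B where "B = ball x0 r"
    define V where "V = \<omega> * r powr n"
    have V: "V > 0" using \<omega> r by (simp add: V_def)
    have Bs: "B \<in> sets lebesgue" unfolding B_def by (rule fmeasurableD[OF lmeasurable_ball])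
    have BV: "emeasure lebesgue B = ennreal V" unfolding B_def V_def \<omega>_def n_def by (rule ball_measure[OF r])
    define E where "E = (if r < 1/4 then - Cc / ln r else if r \<le> norm x0 / 2 then 2 * Cc / ln (exp 1 + r) else 1)"
    define \<delta> where "\<delta> = min 1 E"
    have E0: "E \<ge> 0"
    proof -
      have "1 < exp (1::real)" by simp
      then have "1 < exp 1 + r" using r by linarith
      then have "ln (exp 1 + r) > 0" by (rule ln_gt_zero)
      moreover have "r < 1/4 \<Longrightarrow> ln r < 0" using r by simp
      ultimately show ?thesis unfolding E_def using Cc(1) by (auto simp: divide_nonneg_neg)
    qed
    have \<delta>: "0 \<le> \<delta>" "\<delta> \<le> 1" "\<delta> \<le> E" using E0 by (auto simp: \<delta>_def)
    have oscH: "\<bar>H y - H x0\<bar> \<le> E"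
      if y: "y \<in> B" and "\<not> (r \<ge> 1/4 \<and> \<not> r \<le> norm x0 / 2)"
      and loc: "\<And>x y. dist x y < 1/2 \<Longrightarrow> \<bar>H x - H y\<bar> \<le> - Cc / ln (dist x y)"
      and dec: "\<And>x. \<bar>H x - hinf\<bar> \<le> Cc / ln (exp 1 + norm x)" for H :: "'a \<Rightarrow> real" and hinf y
    proof (cases "r < 1/4")
      case True
      then show ?thesis using osc_small[OF Cc(1) loc, of y x0 r] y True by (simp add: E_def B_def)
    next
      case False
      then have "r \<le> norm x0 / 2" using that(2) by linarith
      then show ?thesis using osc_mid[OF Cc(1) dec, of y x0 r] y False r by (simp add: E_def B_def)
    qed
    have oscQ: "\<bar>Ga y - Ga x0\<bar> \<le> \<delta>" if y: "y \<in> B" for y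
    proof -
      have g1: "\<bar>Ga y - Ga x0\<bar> \<le> \<bar>Q y - Q x0\<bar>" "\<bar>Ga y - Ga x0\<bar> \<le> 1"
        unfolding Ga_def using G_diff(1,2)[OF Q(2)[of y] Q(2)[of x0]] by auto
      show ?thesis
      proof (cases "r \<ge> 1/4 \<and> \<not> r \<le> norm x0 / 2")
        case True then show ?thesis using g1 by (simp add: \<delta>_def E_def)
      next
        case False
        have "\<bar>Q y - Q x0\<bar> \<le> E" by (rule oscH[where H=Q and hinf=pq]) (rule y, rule False, erule locQ, rule decQ)
        then show ?thesis using g1 by (simp add: \<delta>_def)
      qed
    qed
    have oscP: "\<bar>Gp y - Gp x0\<bar> \<le> \<delta>" if y: "y \<in> B" for y
    proof -
      have g1: "\<bar>Gp y - Gp x0\<bar> \<le> \<bar>P y - P x0\<bar>" "\<bar>Gp y - Gp x0\<bar> \<le> 1"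
        unfolding Gp_def using G_diff(1,2)[OF P(2)[of y] P(2)[of x0]] by auto
      show ?thesis
      proof (cases "r \<ge> 1/4 \<and> \<not> r \<le> norm x0 / 2")
        case True then show ?thesis using g1 by (simp add: \<delta>_def E_def)
      next
        case False
        have "\<bar>P y - P x0\<bar> \<le> E" by (rule oscH[where H=P and hinf=pp]) (rule y, rule False, erule locP, rule decP)
        then show ?thesis using g1 by (simp add: \<delta>_def)
      qed
    qed
    define T0 where "T0 = (1 + r / \<rho> x0) powr \<theta>0"
    have T01: "T0 \<ge> 1" unfolding T0_def using \<theta>0 r \<rho>pos[of x0]
      by (intro ge_one_powr_ge_zero) auto
    have Mb: "(max V (1/V)) powr (4*\<delta>) \<le> K * T0"
    proof (cases "r \<ge> 1/4 \<and> \<not> r \<le> norm x0 / 2")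
      case True
      have h\<rho>: "\<rho> x0 \<le> c * \<rho>0 * (1 + norm x0 / \<rho>0) powr (N / (N + 1))"
        using crit[where x=0 and y=x0] by (simp add: \<rho>0_def)
      have "(max V (1/V)) powr (4*\<delta>) \<le> K2 * T0"
        unfolding V_def K2_def T0_def \<theta>0_def
        by (rule bound_C[OF \<omega> n c(1) c(2) \<rho>0 \<rho>pos[of x0] h\<rho>]) (use True \<delta> in auto)
      also have "\<dots> \<le> K * T0" using K1 T01 by (intro mult_right_mono) (auto simp: K_def)
      finally show ?thesis .
    next
      case False
      have cs: "(r < 1/4 \<and> \<delta> \<le> - Cc / ln r) \<or> (1/4 \<le> r \<and> \<delta> \<le> 2 * Cc / ln (exp 1 + r))"
        using False \<delta>(3) by (auto simp: E_def split: if_splits)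
      have "(max V (1/V)) powr (4*\<delta>) \<le> K1"
        unfolding V_def K1_def by (rule bound_AB[OF \<omega> n r \<delta>(1) \<delta>(2) Cc(1) cs])
      also have "\<dots> \<le> K1 * T0" using K1 T01 by simp
      also have "\<dots> \<le> K * T0" using K2 T01 by (intro mult_right_mono) (auto simp: K_def)
      finally show ?thesis .
    qed
    define f where "f y = indicator B y / w y" for y
    have fm: "f \<in> borel_measurable lebesgue" unfolding f_def B_def by (rule weight_meas[OF w])
    have f0: "\<And>y. y \<notin> B \<Longrightarrow> f y = 0" by (simp add: f_def)
    define A where "A = Linf_norm (\<lambda>y. w y * indicator (ball x0 r) y)"
    have A: "A \<ge> 0" unfolding A_def by (rule Linf_nonneg)
    have hyp: "A * LN Ga f \<le> ereal C0 * LN Ga (indicator B) * ereal ((1 + r / \<rho> x0) powr \<theta>)"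
      using hw[OF r, of x0] unfolding A_def f_def B_def luxq .
    have "A * LN Gp f \<le> ereal (2*C0*K) * LN Gp (indicator B) * ereal ((1 + r / \<rho> x0) powr \<theta> * T0)"
      by (rule per_ball[OF Bs BV V G Gm oscQ oscP fm f0 A hyp C0 _ Mb K]) (use T01 in auto)
    also have "(1 + r / \<rho> x0) powr \<theta> * T0 = (1 + r / \<rho> x0) powr (\<theta> + \<theta>0)"
      unfolding T0_def by (simp add: powr_add)
    finally show ?thesis unfolding A_def f_def B_def luxp .
  qed
  show ?thesis
    unfolding A_rho_infty_def mem_Collect_eq
    apply (rule conjI[OF w])
    apply (rule exI[of _ "\<theta> + \<theta>0"])
    apply (rule conjI)
    subgoal using \<theta> \<theta>0 by simp
    apply (rule exI[of _ "2*C0*K"])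
    apply (rule conjI)
    subgoal using C0 K by simp
    apply (intro allI impI)
    apply (rule main)
    apply assumption
    done
qed

end
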